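(* Let $K\ge 2$, $\theta_t\in\mathbb{R}^d$, step size $\eta>0$, and positive integers $b_1,\dots,b_K$ with $b=\sum_{k=1}^K b_k$. Suppose the standing assumptions below hold, and that at $\theta_t$ the task gradients are $\underline{c}$-conflicted and $\bar c$-aligned for some constants $\underline{c},\bar c\ge 0$ with $$\underline{c}<\frac{1}{K-2+b/b_k}\quad\text{for all }k.$$ Form the Mix-batch gradient $$g_t=\frac1b\sum_{k=1}^K\sum_{i=1}^{b_k}\nabla\ell_k(\theta_t;x_{k,i}),$$ where the samples $x_{k,i}\sim\mathcal D_k$ are drawn independently of each other (and of the past), and set $\theta_{t+1}=\theta_t-\eta g_t$. Then, with the expectation taken over the sampling of the batch (conditionally on $\theta_t$), $$\mathbb{E}[\mathcal L(\theta_{t+1})\mid\theta_t]\le \mathcal L(\theta_t)+\sum_{k=1}^K b_k\Big(-\frac{\eta}{b}\beta\|\nabla\mathcal L_k(\theta_t)\|^2+\frac{L\eta^2}{2b^2}\sigma_k^2\Big)+\sum_{k=1}^K b_k^2\,\frac{L\eta^2}{2b^2}\,\gamma\,\|\nabla\mathcal L_k(\theta_t)\|^2,$$ where $\beta:=\min_k\big(1+\underline{c}(-K+2-\tfrac{b}{b_k})\big)\ge 0$ and $\gamma:=1+\bar c(K-1)$.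
   Context: There are $K$ tasks; task $k$ has a data distribution $\mathcal D_k$ on $\mathbb{R}^{d_x}$ and a loss $\ell_k:\mathbb{R}^d\times\mathbb{R}^{d_x}\to\mathbb{R}$, differentiable in $\theta$. Define $\mathcal L_k(\theta)=\mathbb{E}_{x\sim\mathcal D_k}[\ell_k(\theta;x)]$ and $\mathcal L(\theta)=\sum_{k=1}^K\mathcal L_k(\theta)$. Standing assumptions: $\nabla\mathcal L$ is $L$-Lipschitz (and each $\nabla\mathcal L_k$ is $L$-Lipschitz); for all $\theta$ and $k$, $\mathbb{E}_{x\sim\mathcal D_k}[\nabla\ell_k(\theta;x)]=\nabla\mathcal L_k(\theta)$ and $\mathbb{E}_{x\sim\mathcal D_k}\|\nabla\ell_k(\theta;x)-\nabla\mathcal L_k(\theta)\|^2\le\sigma_k^2$. Norms are Euclidean. The gradients at $\theta$ are $\underline{c}$-conflicted ($\underline c\ge0$) if for all $j\neq k$: $\langle\nabla\mathcal L_j(\theta),\nabla\mathcal L_k(\theta)\rangle\ge-\underline{c}\big(\|\nabla\mathcal L_j(\theta)\|^2+\|\nabla\mathcal L_k(\theta)\|^2\big)$. They are $\bar c$-aligned ($\bar c\ge0$) if for all $j\ne k$: $\langle\nabla\mathcal L_j(\theta),\nabla\mathcal L_k(\theta)\rangle\le\bar c\,\|\nabla\mathcal L_j(\theta)\|\,\|\nabla\mathcal L_k(\theta)\|$. *)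

theory Defs
  imports "HOL-Probability.Probability"
begin

definition task_loss :: "(nat \<Rightarrow> 'x measure) \<Rightarrow> (nat \<Rightarrow> 'a \<Rightarrow> 'x \<Rightarrow> real) \<Rightarrow> nat \<Rightarrow> 'a \<Rightarrow> real" where
  "task_loss D l k \<theta> = (\<integral>x. l k \<theta> x \<partial>(D k))"

definition total_loss :: "nat \<Rightarrow> (nat \<Rightarrow> 'x measure) \<Rightarrow> (nat \<Rightarrow> 'a \<Rightarrow> 'x \<Rightarrow> real) \<Rightarrow> 'a \<Rightarrow> real" where
  "total_loss K D l \<theta> = (\<Sum>k<K. task_loss D l k \<theta>)"

definition batch_index :: "nat \<Rightarrow> (nat \<Rightarrow> nat) \<Rightarrow> (nat \<times> nat) set" where
  "batch_index K b = {(k, i). k < K \<and> i < b k}"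

definition batch_measure :: "nat \<Rightarrow> (nat \<Rightarrow> nat) \<Rightarrow> (nat \<Rightarrow> 'x measure) \<Rightarrow> (nat \<times> nat \<Rightarrow> 'x) measure" where
  "batch_measure K b D = PiM (batch_index K b) (\<lambda>(k, i). D k)"

definition mix_batch_grad :: "nat \<Rightarrow> (nat \<Rightarrow> nat) \<Rightarrow> (nat \<Rightarrow> 'a \<Rightarrow> 'x \<Rightarrow> 'a::real_vector) \<Rightarrow> 'a \<Rightarrow> (nat \<times> nat \<Rightarrow> 'x) \<Rightarrow> 'a" where
  "mix_batch_grad K b gl \<theta> \<omega> =
     (1 / real (\<Sum>k<K. b k)) *\<^sub>R (\<Sum>k<K. \<Sum>i<b k. gl k \<theta> (\<omega> (k, i)))"

end

theory Submission imports Defs begin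

lemma descent_upper:
  fixes f :: "'a::real_inner \<Rightarrow> real" and Df :: "'a \<Rightarrow> 'a"
  assumes d: "\<And>u. (f has_derivative (\<lambda>h. Df u \<bullet> h)) (at u)"
    and lip: "\<And>u v. norm (Df u - Df v) \<le> Lip * norm (u - v)"
    and s: "s = 1 \<or> s = -1"
  shows "s * (f y - f x - Df x \<bullet> (y - x)) \<le> Lip / 2 * (norm (y - x))\<^sup>2"
proof -
  define h where "h = y - x"
  define \<psi> where "\<psi> t = s * (f (x + t *\<^sub>R h) - t * (Df x \<bullet> h)) - Lip / 2 * t\<^sup>2 * (norm h)\<^sup>2" for t
  define \<psi>' where "\<psi>' t = s * (Df (x + t *\<^sub>R h) \<bullet> h - Df x \<bullet> h) - Lip * t * (norm h)\<^sup>2" for t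
  have dd: "(\<psi> has_real_derivative \<psi>' t) (at t)" for t
  proof -
    have lin: "((\<lambda>t. x + t *\<^sub>R h) has_derivative (\<lambda>r. r *\<^sub>R h)) (at t)"
      by (auto intro!: derivative_eq_intros)
    have c: "((\<lambda>t. f (x + t *\<^sub>R h)) has_derivative (\<lambda>r. Df (x + t *\<^sub>R h) \<bullet> (r *\<^sub>R h))) (at t)"
      using has_derivative_compose[OF lin d[of "x + t *\<^sub>R h"]] by simp
    have "(\<lambda>r. Df (x + t *\<^sub>R h) \<bullet> (r *\<^sub>R h)) = (*) (Df (x + t *\<^sub>R h) \<bullet> h)"
      by (auto simp: fun_eq_iff)
    with c have c': "((\<lambda>t. f (x + t *\<^sub>R h)) has_real_derivative (Df (x + t *\<^sub>R h) \<bullet> h)) (at t)"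
      by (simp add: has_field_derivative_def)
    show ?thesis unfolding \<psi>_def \<psi>'_def
      by (rule derivative_eq_intros c' refl)+ (simp add: algebra_simps power2_eq_square)
  qed
  have neg: "\<psi>' t \<le> 0" if t: "0 \<le> t" for t
  proof -
    have "s * (Df (x + t *\<^sub>R h) \<bullet> h - Df x \<bullet> h) = (s *\<^sub>R (Df (x + t *\<^sub>R h) - Df x)) \<bullet> h"
      by (simp add: algebra_simps)
    also have "\<dots> \<le> norm (s *\<^sub>R (Df (x + t *\<^sub>R h) - Df x)) * norm h"
      by (rule norm_cauchy_schwarz)
    also have "norm (s *\<^sub>R (Df (x + t *\<^sub>R h) - Df x)) = norm (Df (x + t *\<^sub>R h) - Df x)"
      using s by auto
    also have "norm (Df (x + t *\<^sub>R h) - Df x) * norm h \<le> Lip * norm (t *\<^sub>R h) * norm h"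
      using lip[of "x + t *\<^sub>R h" x] by (intro mult_right_mono) auto
    also have "\<dots> = Lip * t * (norm h)\<^sup>2" using t by (simp add: power2_eq_square)
    finally show ?thesis unfolding \<psi>'_def by simp
  qed
  obtain z where z: "z > 0" "z < 1" "\<psi> 1 - \<psi> 0 = (1 - 0) * \<psi>' z"
    using MVT2[of 0 1 \<psi> \<psi>'] dd by auto
  then have "\<psi> 1 \<le> \<psi> 0" using neg[of z] by simp
  then show ?thesis unfolding \<psi>_def h_def by (simp add: algebra_simps)
qed

lemma descent_abs:
  fixes f :: "'a::real_inner \<Rightarrow> real" and Df :: "'a \<Rightarrow> 'a"
  assumes d: "\<And>u. (f has_derivative (\<lambda>h. Df u \<bullet> h)) (at u)"
    and lip: "\<And>u v. norm (Df u - Df v) \<le> Lip * norm (u - v)"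
  shows "\<bar>f y - f x - Df x \<bullet> (y - x)\<bar> \<le> Lip / 2 * (norm (y - x))\<^sup>2"
proof -
  have h1: "1 * (f y - f x - Df x \<bullet> (y - x)) \<le> Lip / 2 * (norm (y - x))\<^sup>2"
    by (rule descent_upper[OF d lip]) simp
  have h2: "(-1) * (f y - f x - Df x \<bullet> (y - x)) \<le> Lip / 2 * (norm (y - x))\<^sup>2"
    by (rule descent_upper[OF d lip]) simp
  show ?thesis by (rule abs_leI) (use h1 h2 in simp)+
qed

lemma marg:
  fixes f :: "_ \<Rightarrow> 'b::{banach,second_countable_topology}"
  assumes M: "\<And>i. i \<in> I \<Longrightarrow> prob_space (M i)" and a: "a \<in> I"
    and f: "f \<in> borel_measurable (M a)"
  shows "integral\<^sup>L (PiM I M) (\<lambda>\<omega>. f (\<omega> a)) = integral\<^sup>L (M a) f"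
    and "integrable (PiM I M) (\<lambda>\<omega>. f (\<omega> a)) \<longleftrightarrow> integrable (M a) f"
proof -
  have mc: "(\<lambda>\<omega>. \<omega> a) \<in> PiM I M \<rightarrow>\<^sub>M M a" using a by simp
  show "integral\<^sup>L (PiM I M) (\<lambda>\<omega>. f (\<omega> a)) = integral\<^sup>L (M a) f"
    using integral_distr[OF mc f] distr_PiM_component[of I M a, OF M a] by simp
  show "integrable (PiM I M) (\<lambda>\<omega>. f (\<omega> a)) \<longleftrightarrow> integrable (M a) f"
    using integrable_distr_eq[OF mc f] distr_PiM_component[of I M a, OF M a] by simp
qed

lemma cross:
  fixes f h :: "_ \<Rightarrow> real"
  assumes M: "\<And>i. i \<in> I \<Longrightarrow> prob_space (M i)" and fin: "finite I"
    and a: "a \<in> I" and c: "c \<in> I" and ac: "a \<noteq> c"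
    and f: "integrable (M a) f" and h: "integrable (M c) h"
  shows "integral\<^sup>L (PiM I M) (\<lambda>\<omega>. f (\<omega> a) * h (\<omega> c)) = integral\<^sup>L (M a) f * integral\<^sup>L (M c) h"
    and "integrable (PiM I M) (\<lambda>\<omega>. f (\<omega> a) * h (\<omega> c))"
proof -
  define M' where "M' i = (if i \<in> I then M i else return (count_space UNIV) undefined)" for i
  have pM': "prob_space (M' i)" for i
    using M by (auto simp: M'_def intro: prob_space_return)
  interpret product_sigma_finite M'
    unfolding product_sigma_finite_def using pM' by (auto intro: prob_space_imp_sigma_finite)
  have PI: "PiM I M' = PiM I M" by (rule PiM_cong) (auto simp: M'_def)
  define F where "F i = (if i = a then f else if i = c then h else (\<lambda>_. 1::real))" for i
  have int: "integrable (M' i) (F i)" if "i \<in> I" for i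
  proof -
    interpret prob_space "M i" using M that .
    show ?thesis using f h that by (auto simp: F_def M'_def)
  qed
  have eq: "(\<Prod>i\<in>I. F i (\<omega> i)) = f (\<omega> a) * h (\<omega> c)" for \<omega>
  proof -
    have "(\<Prod>i\<in>I. F i (\<omega> i)) = (\<Prod>i\<in>{a,c}. F i (\<omega> i))"
      by (rule prod.mono_neutral_right) (use fin a c in \<open>auto simp: F_def\<close>)
    then show ?thesis using ac by (simp add: F_def)
  qed
  have eq2: "(\<Prod>i\<in>I. integral\<^sup>L (M' i) (F i)) = integral\<^sup>L (M a) f * integral\<^sup>L (M c) h"
  proof -
    have "(\<Prod>i\<in>I. integral\<^sup>L (M' i) (F i)) = (\<Prod>i\<in>{a,c}. integral\<^sup>L (M' i) (F i))"
    proof (rule prod.mono_neutral_right)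
      show "\<forall>i\<in>I - {a, c}. integral\<^sup>L (M' i) (F i) = 1"
      proof
        fix i assume "i \<in> I - {a, c}"
        then show "integral\<^sup>L (M' i) (F i) = 1"
          using prob_space.prob_space[OF pM'[of i]] by (auto simp: F_def measure_def)
      qed
    qed (use fin a c in auto)
    then show ?thesis using ac a c by (simp add: F_def M'_def)
  qed
  show "integral\<^sup>L (PiM I M) (\<lambda>\<omega>. f (\<omega> a) * h (\<omega> c)) = integral\<^sup>L (M a) f * integral\<^sup>L (M c) h"
    using product_integral_prod[OF fin int] eq eq2 PI by simp
  show "integrable (PiM I M) (\<lambda>\<omega>. f (\<omega> a) * h (\<omega> c))"
    using product_integrable_prod[OF fin int] eq PI by simp
qed

lemma sum_Sigma_fst:
  fixes f :: "nat \<Rightarrow> 'v::real_vector"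
  shows "(\<Sum>a\<in>Sigma {..<K} (\<lambda>k. {..<b k}). f (fst a)) = (\<Sum>k<K. real (b k) *\<^sub>R f k)"
proof -
  have "(\<Sum>a\<in>Sigma {..<K} (\<lambda>k. {..<b k}). f (fst a)) = (\<Sum>k<K. \<Sum>i<b k. f k)"
    by (subst sum.Sigma) (auto simp: split_beta')
  also have "\<dots> = (\<Sum>k<K. real (b k) *\<^sub>R f k)" by (simp add: sum_constant_scaleR)
  finally show ?thesis .
qed

lemma partA:
  fixes G :: "nat \<Rightarrow> 'a::real_inner" and bb :: "nat \<Rightarrow> real" and c B :: real
  assumes bpos: "\<And>k. k < K \<Longrightarrow> bb k > 0" and B: "B = (\<Sum>j<K. bb j)" and c: "c \<ge> 0"
    and conf: "\<And>j k. j < K \<Longrightarrow> k < K \<Longrightarrow> j \<noteq> k \<Longrightarrow>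
        G j \<bullet> G k \<ge> - c * ((norm (G j))\<^sup>2 + (norm (G k))\<^sup>2)"
    and beta: "\<And>k. k < K \<Longrightarrow> \<beta> \<le> 1 + c * (- real K + 2 - B / bb k)"
  shows "(\<Sum>k<K. bb k * \<beta> * (norm (G k))\<^sup>2) \<le> (\<Sum>j<K. G j) \<bullet> (\<Sum>k<K. bb k *\<^sub>R G k)"
proof -
  define n where "n j = (norm (G j))\<^sup>2" for j
  have "(\<Sum>j<K. G j) \<bullet> (\<Sum>k<K. bb k *\<^sub>R G k) = (\<Sum>j<K. \<Sum>k<K. bb k * (G j \<bullet> G k))"
    by (simp add: inner_sum_left inner_sum_right sum_distrib_left) (rule sum.swap)
  also have "\<dots> \<ge> (\<Sum>j<K. \<Sum>k<K. - c * bb k * (n j + n k) + (if k = j then bb j * (1 + 2 * c) * n j else 0))"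
  proof (intro sum_mono)
    fix j k assume j: "j \<in> {..<K}" and k: "k \<in> {..<K}"
    show "- c * bb k * (n j + n k) + (if k = j then bb j * (1 + 2 * c) * n j else 0) \<le> bb k * (G j \<bullet> G k)"
    proof (cases "k = j")
      case True
      then show ?thesis by (simp add: n_def power2_norm_eq_inner algebra_simps)
    next
      case False
      have "bb k * (- c * (n j + n k)) \<le> bb k * (G j \<bullet> G k)"
        using conf[of j k] j k False bpos[of k] unfolding n_def by (intro mult_left_mono) auto
      then show ?thesis using False by (simp add: algebra_simps)
    qed
  qed
  also have "(\<Sum>j<K. \<Sum>k<K. - c * bb k * (n j + n k) + (if k = j then bb j * (1 + 2 * c) * n j else 0))
      = (\<Sum>k<K. bb k * (1 + 2 * c) * n k - c * B * n k - c * real K * bb k * n k)"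
    by (simp add: sum.distrib sum_subtractf sum_distrib_left sum_distrib_right algebra_simps B)
  also have "\<dots> = (\<Sum>k<K. bb k * (1 + c * (- real K + 2 - B / bb k)) * n k)"
  proof (intro sum.cong refl)
    fix k assume "k \<in> {..<K}"
    then have "bb k > 0" using bpos by auto
    then show "bb k * (1 + 2 * c) * n k - c * B * n k - c * real K * bb k * n k
        = bb k * (1 + c * (- real K + 2 - B / bb k)) * n k" by (simp add: field_simps)
  qed
  finally have *: "(\<Sum>k<K. bb k * (1 + c * (- real K + 2 - B / bb k)) * n k) \<le> (\<Sum>j<K. G j) \<bullet> (\<Sum>k<K. bb k *\<^sub>R G k)" .
  have "(\<Sum>k<K. bb k * \<beta> * (norm (G k))\<^sup>2) \<le> (\<Sum>k<K. bb k * (1 + c * (- real K + 2 - B / bb k)) * n k)"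
    unfolding n_def using bpos beta by (intro sum_mono mult_right_mono mult_left_mono) (auto intro: less_imp_le)
  with * show ?thesis by linarith
qed

lemma partB:
  fixes G :: "nat \<Rightarrow> 'a::real_inner" and bb :: "nat \<Rightarrow> real" and c :: real
  assumes bpos: "\<And>k. k < K \<Longrightarrow> bb k > 0" and c: "c \<ge> 0"
    and al: "\<And>j k. j < K \<Longrightarrow> k < K \<Longrightarrow> j \<noteq> k \<Longrightarrow>
        G j \<bullet> G k \<le> c * norm (G j) * norm (G k)"
  shows "(norm (\<Sum>k<K. bb k *\<^sub>R G k))\<^sup>2 \<le> (1 + c * (real K - 1)) * (\<Sum>k<K. (bb k)\<^sup>2 * (norm (G k))\<^sup>2)"
proof -
  define n where "n j = (bb j)\<^sup>2 * (norm (G j))\<^sup>2" for j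
  have "(norm (\<Sum>k<K. bb k *\<^sub>R G k))\<^sup>2 = (\<Sum>j<K. \<Sum>k<K. bb j * bb k * (G j \<bullet> G k))"
    by (simp add: power2_norm_eq_inner inner_sum_left inner_sum_right sum_distrib_left)
       (subst sum.swap, simp add: algebra_simps inner_commute)
  also have "\<dots> \<le> (\<Sum>j<K. \<Sum>k<K. c / 2 * n j + c / 2 * n k + (if k = j then (1 - c) * n j else 0))"
  proof (intro sum_mono)
    fix j k assume j: "j \<in> {..<K}" and k: "k \<in> {..<K}"
    show "bb j * bb k * (G j \<bullet> G k) \<le> c / 2 * n j + c / 2 * n k + (if k = j then (1 - c) * n j else 0)"
    proof (cases "k = j")
      case True
      have e: "G j \<bullet> G j = (norm (G j))\<^sup>2" by (simp add: power2_norm_eq_inner)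
      show ?thesis using True e by (simp add: n_def algebra_simps power2_eq_square)
    next
      case False
      have p: "0 \<le> bb j * bb k" using bpos[of j] bpos[of k] j k by simp
      have "bb j * bb k * (G j \<bullet> G k) \<le> bb j * bb k * (c * norm (G j) * norm (G k))"
        using al[of j k] j k False p by (intro mult_left_mono) auto
      also have "\<dots> = c * ((bb j * norm (G j)) * (bb k * norm (G k)))" by (simp add: algebra_simps)
      also have "\<dots> \<le> c * (((bb j * norm (G j))\<^sup>2 + (bb k * norm (G k))\<^sup>2) / 2)"
        using c sum_squares_bound[of "bb j * norm (G j)" "bb k * norm (G k)"]
        by (intro mult_left_mono) auto
      finally show ?thesis using False by (simp add: n_def algebra_simps power_mult_distrib)
    qed
  qed
  also have "(\<Sum>j<K. \<Sum>k<K. c / 2 * n j + c / 2 * n k + (if k = j then (1 - c) * n j else 0))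
     = (\<Sum>j<K. real K * (c / 2) * n j) + (\<Sum>j<K. \<Sum>k<K. c / 2 * n k) + (\<Sum>j<K. (1 - c) * n j)"
    by (simp add: sum.distrib mult.assoc)
  also have "\<dots> = (1 + c * (real K - 1)) * (\<Sum>k<K. n k)"
  proof -
    have s1: "(\<Sum>j<K. real K * (c / 2) * n j) = real K * (c / 2) * (\<Sum>k<K. n k)"
      by (simp add: sum_distrib_left)
    have s2: "(\<Sum>j<K. \<Sum>k<K. c / 2 * n k) = real K * (c / 2 * (\<Sum>k<K. n k))"
      by (simp add: sum_distrib_left)
    have s3: "(\<Sum>j<K. (1 - c) * n j) = (1 - c) * (\<Sum>k<K. n k)"
      by (simp add: sum_distrib_left)
    show ?thesis unfolding s1 s2 s3 by (simp add: algebra_simps)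
  qed
  finally show ?thesis by (simp add: n_def)
qed
theorem theorem1:
  fixes K :: nat and b :: "nat \<Rightarrow> nat"
    and D :: "nat \<Rightarrow> 'x measure"
    and l :: "nat \<Rightarrow> 'a::euclidean_space \<Rightarrow> 'x \<Rightarrow> real"
    and gl :: "nat \<Rightarrow> 'a \<Rightarrow> 'x \<Rightarrow> 'a"
    and G :: "nat \<Rightarrow> 'a \<Rightarrow> 'a"
    and Lip \<eta> c_lo c_hi :: real and \<sigma> :: "nat \<Rightarrow> real" and \<theta> :: 'a
  assumes K2: "K \<ge> 2"
    and b_pos: "\<And>k. k < K \<Longrightarrow> b k > 0"
    and eta_pos: "\<eta> > 0"
    and prob: "\<And>k. k < K \<Longrightarrow> prob_space (D k)"
    \<comment> \<open>the loss is integrable (so L_k is defined) and differentiable in theta with gradient gl\<close>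
    and l_int: "\<And>k u. k < K \<Longrightarrow> integrable (D k) (l k u)"
    and l_grad: "\<And>k u x. k < K \<Longrightarrow>
        ((\<lambda>u'. l k u' x) has_derivative (\<lambda>h. gl k u x \<bullet> h)) (at u)"
    \<comment> \<open>G k is the gradient of L_k\<close>
    and L_grad: "\<And>k u. k < K \<Longrightarrow>
        (task_loss D l k has_derivative (\<lambda>h. G k u \<bullet> h)) (at u)"
    \<comment> \<open>Lipschitz gradients (total and per task)\<close>
    and Lip_total: "\<And>u u'. norm ((\<Sum>k<K. G k u) - (\<Sum>k<K. G k u')) \<le> Lip * norm (u - u')"
    and Lip_task: "\<And>k u u'. k < K \<Longrightarrow> norm (G k u - G k u') \<le> Lip * norm (u - u')"
    \<comment> \<open>unbiased stochastic gradients\<close>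
    and unbiased_int: "\<And>k u. k < K \<Longrightarrow> integrable (D k) (gl k u)"
    and unbiased: "\<And>k u. k < K \<Longrightarrow> (\<integral>x. gl k u x \<partial>(D k)) = G k u"
    \<comment> \<open>bounded variance\<close>
    and var_int: "\<And>k u. k < K \<Longrightarrow> integrable (D k) (\<lambda>x. (norm (gl k u x - G k u))\<^sup>2)"
    and var_bound: "\<And>k u. k < K \<Longrightarrow> (\<integral>x. (norm (gl k u x - G k u))\<^sup>2 \<partial>(D k)) \<le> (\<sigma> k)\<^sup>2"
    \<comment> \<open>c_lo-conflicted and c_hi-aligned at theta\<close>
    and c_lo_nn: "c_lo \<ge> 0" and c_hi_nn: "c_hi \<ge> 0"
    and conflicted: "\<And>j k. j < K \<Longrightarrow> k < K \<Longrightarrow> j \<noteq> k \<Longrightarrow>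
        G j \<theta> \<bullet> G k \<theta> \<ge> - c_lo * ((norm (G j \<theta>))\<^sup>2 + (norm (G k \<theta>))\<^sup>2)"
    and aligned: "\<And>j k. j < K \<Longrightarrow> k < K \<Longrightarrow> j \<noteq> k \<Longrightarrow>
        G j \<theta> \<bullet> G k \<theta> \<le> c_hi * norm (G j \<theta>) * norm (G k \<theta>)"
    and c_lo_small: "\<And>k. k < K \<Longrightarrow>
        c_lo < 1 / (real K - 2 + real (\<Sum>j<K. b j) / real (b k))"
  shows "(\<integral>\<omega>. total_loss K D l (\<theta> - \<eta> *\<^sub>R mix_batch_grad K b gl \<theta> \<omega>) \<partial>(batch_measure K b D))
    \<le> total_loss K D l \<theta>
      + (\<Sum>k<K. real (b k) *
          (- \<eta> / real (\<Sum>j<K. b j)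
               * (MIN k\<in>{..<K}. 1 + c_lo * (- real K + 2 - real (\<Sum>j<K. b j) / real (b k)))
               * (norm (G k \<theta>))\<^sup>2
           + Lip * \<eta>\<^sup>2 / (2 * (real (\<Sum>j<K. b j))\<^sup>2) * (\<sigma> k)\<^sup>2))
      + (\<Sum>k<K. (real (b k))\<^sup>2 * (Lip * \<eta>\<^sup>2 / (2 * (real (\<Sum>j<K. b j))\<^sup>2))
           * (1 + c_hi * (real K - 1)) * (norm (G k \<theta>))\<^sup>2)"
  proof -
  define Bn where "Bn = (\<Sum>j<K. b j)"
  define B where "B = real Bn"
  have K0: "0 < K" using K2 by simp
  have "b 0 \<le> Bn" unfolding Bn_def using K0 by (intro member_le_sum) auto
  then have Bpos: "B > 0" using b_pos[OF K0] by (simp add: B_def)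
  have B_sum: "B = (\<Sum>j<K. real (b j))" by (simp add: B_def Bn_def)
  define I where "I = batch_index K b"
  have I_eq: "I = Sigma {..<K} (\<lambda>k. {..<b k})" by (auto simp: I_def batch_index_def)
  have finI: "finite I" by (simp add: I_eq)
  have Ik: "\<And>a. a \<in> I \<Longrightarrow> fst a < K" by (auto simp: I_def batch_index_def)
  define Mm where "Mm = (\<lambda>a::nat\<times>nat. D (fst a))"
  have P_eq: "batch_measure K b D = PiM I Mm"
    unfolding batch_measure_def I_def Mm_def by (simp add: split_beta')
  have Mprob: "\<And>a. a \<in> I \<Longrightarrow> prob_space (Mm a)" using prob Ik by (simp add: Mm_def)
  interpret P: prob_space "PiM I Mm" by (rule prob_space_PiM) (rule Mprob)
  define Yf :: "nat \<times> nat \<Rightarrow> 'x \<Rightarrow> 'a" where "Yf a x = gl (fst a) \<theta> x - G (fst a) \<theta>" for a x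
  have glint: "\<And>a. a \<in> I \<Longrightarrow> integrable (Mm a) (gl (fst a) \<theta>)"
    using unbiased_int Ik by (auto simp: Mm_def)
  have Yf_int: "\<And>a. a \<in> I \<Longrightarrow> integrable (Mm a) (Yf a)"
  proof -
    fix a assume a: "a \<in> I"
    interpret prob_space "Mm a" by (rule Mprob[OF a])
    show "integrable (Mm a) (Yf a)" unfolding Yf_def using glint[OF a] by auto
  qed
  have Yfm: "\<And>a. a \<in> I \<Longrightarrow> Yf a \<in> borel_measurable (Mm a)"
    by (rule borel_measurable_integrable[OF Yf_int])
  have Yf_mean: "\<And>a. a \<in> I \<Longrightarrow> integral\<^sup>L (Mm a) (Yf a) = 0"
  proof -
    fix a assume a: "a \<in> I"
    interpret prob_space "Mm a" by (rule Mprob[OF a])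
    have "integral\<^sup>L (Mm a) (Yf a) = integral\<^sup>L (Mm a) (gl (fst a) \<theta>) - integral\<^sup>L (Mm a) (\<lambda>_. G (fst a) \<theta>)"
      unfolding Yf_def using glint[OF a] by (intro Bochner_Integration.integral_diff) auto
    also have "\<dots> = 0" using unbiased[OF Ik[OF a]] by (simp add: Mm_def prob_space.prob_space[OF prob[OF Ik[OF a]]])
    finally show "integral\<^sup>L (Mm a) (Yf a) = 0" .
  qed
  have Yf_var_int: "\<And>a. a \<in> I \<Longrightarrow> integrable (Mm a) (\<lambda>x. (norm (Yf a x))\<^sup>2)"
    using var_int Ik by (simp add: Mm_def Yf_def)
  have Yf_var: "\<And>a. a \<in> I \<Longrightarrow> integral\<^sup>L (Mm a) (\<lambda>x. (norm (Yf a x))\<^sup>2) \<le> (\<sigma> (fst a))\<^sup>2"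
    using var_bound Ik by (simp add: Mm_def Yf_def)
  have Y_int: "\<And>a. a \<in> I \<Longrightarrow> integrable (PiM I Mm) (\<lambda>\<omega>. Yf a (\<omega> a))"
  proof -
    fix a assume a: "a \<in> I"
    show "integrable (PiM I Mm) (\<lambda>\<omega>. Yf a (\<omega> a))"
      using marg(2)[where I=I and M=Mm and a=a and f="Yf a"] Mprob a Yfm[OF a] Yf_int[OF a] by blast
  qed
  have Yv_int: "\<And>a v. a \<in> I \<Longrightarrow> integrable (PiM I Mm) (\<lambda>\<omega>. v \<bullet> Yf a (\<omega> a))"
    by (rule integrable_inner_right[OF Y_int])
  have Yv_mean: "\<And>a v. a \<in> I \<Longrightarrow> integral\<^sup>L (PiM I Mm) (\<lambda>\<omega>. v \<bullet> Yf a (\<omega> a)) = 0"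
  proof -
    fix a v assume a: "a \<in> I"
    have "integral\<^sup>L (PiM I Mm) (\<lambda>\<omega>. v \<bullet> Yf a (\<omega> a)) = v \<bullet> integral\<^sup>L (PiM I Mm) (\<lambda>\<omega>. Yf a (\<omega> a))"
      by (rule integral_inner_right) (rule Y_int[OF a])
    also have "\<dots> = 0" 
      using marg(1)[where I=I and M=Mm and a=a and f="Yf a"] Mprob a Yfm[OF a] Yf_mean[OF a] by simp
    finally show "integral\<^sup>L (PiM I Mm) (\<lambda>\<omega>. v \<bullet> Yf a (\<omega> a)) = 0" .
  qed
  have YY: "\<And>a c. a \<in> I \<Longrightarrow> c \<in> I \<Longrightarrow>
      integrable (PiM I Mm) (\<lambda>\<omega>. Yf a (\<omega> a) \<bullet> Yf c (\<omega> c)) \<and>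
      integral\<^sup>L (PiM I Mm) (\<lambda>\<omega>. Yf a (\<omega> a) \<bullet> Yf c (\<omega> c)) =
        (if c = a then integral\<^sup>L (Mm a) (\<lambda>x. (norm (Yf a x))\<^sup>2) else 0)"
  proof -
    fix a c assume a: "a \<in> I" and c: "c \<in> I"
    show "integrable (PiM I Mm) (\<lambda>\<omega>. Yf a (\<omega> a) \<bullet> Yf c (\<omega> c)) \<and>
      integral\<^sup>L (PiM I Mm) (\<lambda>\<omega>. Yf a (\<omega> a) \<bullet> Yf c (\<omega> c)) =
        (if c = a then integral\<^sup>L (Mm a) (\<lambda>x. (norm (Yf a x))\<^sup>2) else 0)"
    proof (cases "c = a")
      case True
      have e: "(\<lambda>\<omega>. Yf a (\<omega> a) \<bullet> Yf a (\<omega> a)) = (\<lambda>\<omega>. (\<lambda>x. (norm (Yf a x))\<^sup>2) (\<omega> a))"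
        by (simp add: power2_norm_eq_inner)
      have m2: "(\<lambda>x. (norm (Yf a x))\<^sup>2) \<in> borel_measurable (Mm a)"
        by (rule borel_measurable_integrable[OF Yf_var_int[OF a]])
      have 1: "integral\<^sup>L (PiM I Mm) (\<lambda>\<omega>. (\<lambda>x. (norm (Yf a x))\<^sup>2) (\<omega> a)) = integral\<^sup>L (Mm a) (\<lambda>x. (norm (Yf a x))\<^sup>2)"
        using marg(1)[where I=I and M=Mm and a=a and f="\<lambda>x. (norm (Yf a x))\<^sup>2"] Mprob a m2 by blast
      have 2: "integrable (PiM I Mm) (\<lambda>\<omega>. (\<lambda>x. (norm (Yf a x))\<^sup>2) (\<omega> a))"
        using marg(2)[where I=I and M=Mm and a=a and f="\<lambda>x. (norm (Yf a x))\<^sup>2"] Mprob a m2 Yf_var_int[OF a] by blast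
      show ?thesis using True 1 2 by (simp add: power2_norm_eq_inner)
    next
      case False
      have e: "(\<lambda>\<omega>. Yf a (\<omega> a) \<bullet> Yf c (\<omega> c)) = (\<lambda>\<omega>. \<Sum>e\<in>Basis. (Yf a (\<omega> a) \<bullet> e) * (Yf c (\<omega> c) \<bullet> e))"
        by (rule ext) (rule euclidean_inner)
      have cr: "integrable (PiM I Mm) (\<lambda>\<omega>. (Yf a (\<omega> a) \<bullet> e) * (Yf c (\<omega> c) \<bullet> e)) \<and>
          integral\<^sup>L (PiM I Mm) (\<lambda>\<omega>. (Yf a (\<omega> a) \<bullet> e) * (Yf c (\<omega> c) \<bullet> e)) = 0" for e
      proof -
        have ia: "integrable (Mm a) (\<lambda>x. Yf a x \<bullet> e)" by (rule integrable_inner_left[OF Yf_int[OF a]])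
        have ic: "integrable (Mm c) (\<lambda>x. Yf c x \<bullet> e)" by (rule integrable_inner_left[OF Yf_int[OF c]])
        have ma: "integral\<^sup>L (Mm a) (\<lambda>x. Yf a x \<bullet> e) = 0"
          using Yf_mean[OF a] Yf_int[OF a] by simp
        have ac: "a \<noteq> c" using False by simp
        show ?thesis
          using cross[where I=I and M=Mm and a=a and c=c and f="\<lambda>x. Yf a x \<bullet> e" and h="\<lambda>x. Yf c x \<bullet> e"]
            Mprob finI a c ac ia ic ma by simp
      qed
      have "integrable (PiM I Mm) (\<lambda>\<omega>. \<Sum>e\<in>Basis. (Yf a (\<omega> a) \<bullet> e) * (Yf c (\<omega> c) \<bullet> e))"
        using cr by (intro Bochner_Integration.integrable_sum) blast
      moreover have "integral\<^sup>L (PiM I Mm) (\<lambda>\<omega>. \<Sum>e\<in>Basis. (Yf a (\<omega> a) \<bullet> e) * (Yf c (\<omega> c) \<bullet> e)) = 0"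
        using cr by (subst Bochner_Integration.integral_sum) auto
      ultimately show ?thesis using False unfolding e by simp
    qed
  qed
  define m where "m = (\<Sum>a\<in>I. G (fst a) \<theta>)"
  define gr where "gr = (\<Sum>k<K. G k \<theta>)"
  define Q where "Q \<omega> = (norm m)\<^sup>2 + 2 * (\<Sum>a\<in>I. m \<bullet> Yf a (\<omega> a)) + (\<Sum>a\<in>I. \<Sum>c\<in>I. Yf a (\<omega> a) \<bullet> Yf c (\<omega> c))" for \<omega>
  define R where "R \<omega> = gr \<bullet> m + (\<Sum>a\<in>I. gr \<bullet> Yf a (\<omega> a))" for \<omega>
  define g where "g \<omega> = mix_batch_grad K b gl \<theta> \<omega>" for \<omega>
  have g_eq: "g \<omega> = (1 / B) *\<^sub>R (m + (\<Sum>a\<in>I. Yf a (\<omega> a)))" for \<omega>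
  proof -
    have "(\<Sum>k<K. \<Sum>i<b k. gl k \<theta> (\<omega> (k, i))) = (\<Sum>a\<in>I. gl (fst a) \<theta> (\<omega> a))"
      unfolding I_eq by (subst sum.Sigma) (simp_all add: split_beta)
    also have "\<dots> = (\<Sum>a\<in>I. G (fst a) \<theta> + Yf a (\<omega> a))" by (simp add: Yf_def)
    also have "\<dots> = m + (\<Sum>a\<in>I. Yf a (\<omega> a))" by (simp add: sum.distrib m_def)
    finally show ?thesis unfolding g_def mix_batch_grad_def B_def Bn_def by simp
  qed
  have gr_g: "gr \<bullet> g \<omega> = R \<omega> / B" for \<omega>
    by (simp add: g_eq R_def inner_add_right inner_sum_right divide_inverse mult.commute)
  have g_sq: "(norm (g \<omega>))\<^sup>2 = Q \<omega> / B\<^sup>2" for \<omega>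
  proof -
    define S where "S = (\<Sum>a\<in>I. Yf a (\<omega> a))"
    have "(norm (m + S))\<^sup>2 = (norm m)\<^sup>2 + 2 * (m \<bullet> S) + S \<bullet> S"
      by (simp add: power2_norm_eq_inner inner_add_left inner_add_right inner_commute[of S m])
    also have "\<dots> = Q \<omega>" unfolding Q_def S_def by (simp add: inner_sum_left inner_sum_right) (rule sum.swap)
    finally have "(norm (m + S))\<^sup>2 = Q \<omega>" .
    then show ?thesis unfolding g_eq S_def[symmetric] using Bpos
      by (simp add: power_mult_distrib power_divide)
  qed
  have YYi: "\<And>a c. a \<in> I \<Longrightarrow> c \<in> I \<Longrightarrow> integrable (PiM I Mm) (\<lambda>\<omega>. Yf a (\<omega> a) \<bullet> Yf c (\<omega> c))"
    using YY by blast
  have i1: "integrable (PiM I Mm) (\<lambda>\<omega>. \<Sum>a\<in>I. m \<bullet> Yf a (\<omega> a))"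
    by (rule Bochner_Integration.integrable_sum) (rule Yv_int)
  have i1': "integrable (PiM I Mm) (\<lambda>\<omega>. \<Sum>a\<in>I. gr \<bullet> Yf a (\<omega> a))"
    by (rule Bochner_Integration.integrable_sum) (rule Yv_int)
  have i2: "integrable (PiM I Mm) (\<lambda>\<omega>. \<Sum>a\<in>I. \<Sum>c\<in>I. Yf a (\<omega> a) \<bullet> Yf c (\<omega> c))"
    by (rule Bochner_Integration.integrable_sum, rule Bochner_Integration.integrable_sum) (rule YYi)
  have s1: "integral\<^sup>L (PiM I Mm) (\<lambda>\<omega>. \<Sum>a\<in>I. m \<bullet> Yf a (\<omega> a)) = 0"
    by (subst Bochner_Integration.integral_sum) (simp_all add: Yv_int Yv_mean)
  have s1': "integral\<^sup>L (PiM I Mm) (\<lambda>\<omega>. \<Sum>a\<in>I. gr \<bullet> Yf a (\<omega> a)) = 0"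
    by (subst Bochner_Integration.integral_sum) (simp_all add: Yv_int Yv_mean)
  have s2: "integral\<^sup>L (PiM I Mm) (\<lambda>\<omega>. \<Sum>a\<in>I. \<Sum>c\<in>I. Yf a (\<omega> a) \<bullet> Yf c (\<omega> c))
      = (\<Sum>a\<in>I. integral\<^sup>L (Mm a) (\<lambda>x. (norm (Yf a x))\<^sup>2))"
  proof -
    have "integral\<^sup>L (PiM I Mm) (\<lambda>\<omega>. \<Sum>a\<in>I. \<Sum>c\<in>I. Yf a (\<omega> a) \<bullet> Yf c (\<omega> c))
      = (\<Sum>a\<in>I. integral\<^sup>L (PiM I Mm) (\<lambda>\<omega>. \<Sum>c\<in>I. Yf a (\<omega> a) \<bullet> Yf c (\<omega> c)))"
      by (rule Bochner_Integration.integral_sum, rule Bochner_Integration.integrable_sum) (rule YYi)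
    also have "\<dots> = (\<Sum>a\<in>I. \<Sum>c\<in>I. integral\<^sup>L (PiM I Mm) (\<lambda>\<omega>. Yf a (\<omega> a) \<bullet> Yf c (\<omega> c)))"
      by (intro sum.cong refl Bochner_Integration.integral_sum YYi)
    also have "\<dots> = (\<Sum>a\<in>I. \<Sum>c\<in>I. (if c = a then integral\<^sup>L (Mm a) (\<lambda>x. (norm (Yf a x))\<^sup>2) else 0))"
      using YY by (intro sum.cong refl) blast
    also have "\<dots> = (\<Sum>a\<in>I. integral\<^sup>L (Mm a) (\<lambda>x. (norm (Yf a x))\<^sup>2))"
      using finI by (simp add: sum.delta)
    finally show ?thesis .
  qed
  have Q_int: "integrable (PiM I Mm) Q"
    unfolding Q_def by (intro Bochner_Integration.integrable_add integrable_mult_right i1 i2 P.integrable_const)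
  have Q_integral: "integral\<^sup>L (PiM I Mm) Q = (norm m)\<^sup>2 + (\<Sum>a\<in>I. integral\<^sup>L (Mm a) (\<lambda>x. (norm (Yf a x))\<^sup>2))"
    unfolding Q_def
    by (subst Bochner_Integration.integral_add, (intro Bochner_Integration.integrable_add integrable_mult_right i1 i2 P.integrable_const)+,
        subst Bochner_Integration.integral_add, (intro Bochner_Integration.integrable_add integrable_mult_right i1 i2 P.integrable_const)+)
       (simp add: s1 s2 P.prob_space)
  have R_int: "integrable (PiM I Mm) R"
    unfolding R_def by (intro Bochner_Integration.integrable_add i1' P.integrable_const)
  have R_integral: "integral\<^sup>L (PiM I Mm) R = gr \<bullet> m"
    unfolding R_def
    by (subst Bochner_Integration.integral_add, (intro i1' P.integrable_const)+) (simp add: s1' P.prob_space)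
  define Lf where "Lf = total_loss K D l"
  have Ld: "\<And>u. (Lf has_derivative (\<lambda>h. (\<Sum>k<K. G k u) \<bullet> h)) (at u)"
  proof -
    fix u
    have "((\<lambda>u. \<Sum>k<K. task_loss D l k u) has_derivative (\<lambda>h. \<Sum>k<K. G k u \<bullet> h)) (at u)"
      by (rule has_derivative_sum) (rule L_grad, simp)
    moreover have "(\<lambda>u. \<Sum>k<K. task_loss D l k u) = Lf" by (rule ext) (simp add: Lf_def total_loss_def)
    moreover have "(\<lambda>h. \<Sum>k<K. G k u \<bullet> h) = (\<lambda>h. (\<Sum>k<K. G k u) \<bullet> h)" by (simp add: inner_sum_left)
    ultimately show "(Lf has_derivative (\<lambda>h. (\<Sum>k<K. G k u) \<bullet> h)) (at u)" by simp
  qed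
  have desc: "\<bar>Lf (\<theta> - \<eta> *\<^sub>R g \<omega>) - Lf \<theta> + \<eta> * (gr \<bullet> g \<omega>)\<bar> \<le> Lip / 2 * \<eta>\<^sup>2 * (norm (g \<omega>))\<^sup>2" for \<omega>
  proof -
    have d: "\<bar>Lf (\<theta> - \<eta> *\<^sub>R g \<omega>) - Lf \<theta> - gr \<bullet> ((\<theta> - \<eta> *\<^sub>R g \<omega>) - \<theta>)\<bar>
        \<le> Lip / 2 * (norm ((\<theta> - \<eta> *\<^sub>R g \<omega>) - \<theta>))\<^sup>2"
      unfolding gr_def by (rule descent_abs[OF Ld Lip_total])
    have e1: "(\<theta> - \<eta> *\<^sub>R g \<omega>) - \<theta> = - (\<eta> *\<^sub>R g \<omega>)" by simp
    have e2: "(norm (- (\<eta> *\<^sub>R g \<omega>)))\<^sup>2 = \<eta>\<^sup>2 * (norm (g \<omega>))\<^sup>2"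
      using eta_pos by (simp add: power_mult_distrib)
    show ?thesis using d unfolding e1 e2 by (simp add: algebra_simps)
  qed
  define U where "U \<omega> = Lf \<theta> - \<eta> / B * R \<omega> + Lip * \<eta>\<^sup>2 / (2 * B\<^sup>2) * Q \<omega>" for \<omega>
  define V where "V \<omega> = Lf \<theta> - \<eta> / B * R \<omega> - Lip * \<eta>\<^sup>2 / (2 * B\<^sup>2) * Q \<omega>" for \<omega>
  have UV: "U \<omega> = Lf \<theta> - \<eta> * (gr \<bullet> g \<omega>) + Lip / 2 * \<eta>\<^sup>2 * (norm (g \<omega>))\<^sup>2"
     "V \<omega> = Lf \<theta> - \<eta> * (gr \<bullet> g \<omega>) - Lip / 2 * \<eta>\<^sup>2 * (norm (g \<omega>))\<^sup>2" for \<omega>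
    unfolding U_def V_def gr_g g_sq by (simp_all add: field_simps)
  have FU: "Lf (\<theta> - \<eta> *\<^sub>R g \<omega>) \<le> U \<omega>" for \<omega>
    using desc[of \<omega>] unfolding UV abs_le_iff by linarith
  have VF: "V \<omega> \<le> Lf (\<theta> - \<eta> *\<^sub>R g \<omega>)" for \<omega>
    using desc[of \<omega>] unfolding UV abs_le_iff by linarith
  have Fm: "(\<lambda>\<omega>. Lf (\<theta> - \<eta> *\<^sub>R g \<omega>)) \<in> borel_measurable (PiM I Mm)"
  proof -
    have cont: "continuous_on UNIV Lf"
      by (rule has_derivative_continuous_on) (rule Ld)
    have Ym: "\<And>a. a \<in> I \<Longrightarrow> (\<lambda>\<omega>. Yf a (\<omega> a)) \<in> borel_measurable (PiM I Mm)"
    proof -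
      fix a assume a: "a \<in> I"
      show "(\<lambda>\<omega>. Yf a (\<omega> a)) \<in> borel_measurable (PiM I Mm)"
        by (rule measurable_compose[OF measurable_component_singleton[where M=Mm, OF a] Yfm[OF a]])
    qed
    have "(\<lambda>\<omega>. \<Sum>a\<in>I. Yf a (\<omega> a)) \<in> borel_measurable (PiM I Mm)"
      by (rule borel_measurable_sum) (rule Ym)
    then have gm: "(\<lambda>\<omega>. \<theta> - \<eta> *\<^sub>R g \<omega>) \<in> borel_measurable (PiM I Mm)"
      unfolding g_eq by simp
    show ?thesis
      by (rule measurable_compose[OF gm borel_measurable_continuous_onI[OF cont]])
  qed
  have U_int: "integrable (PiM I Mm) U" unfolding U_def
    by (intro Bochner_Integration.integrable_add Bochner_Integration.integrable_diff integrable_mult_right R_int Q_int) simp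
  have V_int: "integrable (PiM I Mm) V" unfolding V_def
    by (intro Bochner_Integration.integrable_add Bochner_Integration.integrable_diff integrable_mult_right R_int Q_int) simp
  have F_int: "integrable (PiM I Mm) (\<lambda>\<omega>. Lf (\<theta> - \<eta> *\<^sub>R g \<omega>))"
  proof (rule Bochner_Integration.integrable_bound[OF _ Fm])
    show "integrable (PiM I Mm) (\<lambda>\<omega>. \<bar>U \<omega>\<bar> + \<bar>V \<omega>\<bar>)" by (intro Bochner_Integration.integrable_add integrable_abs U_int V_int)
    show "AE \<omega> in PiM I Mm. norm (Lf (\<theta> - \<eta> *\<^sub>R g \<omega>)) \<le> norm (\<bar>U \<omega>\<bar> + \<bar>V \<omega>\<bar>)"
      proof (intro AE_I2)
      fix \<omega> show "norm (Lf (\<theta> - \<eta> *\<^sub>R g \<omega>)) \<le> norm (\<bar>U \<omega>\<bar> + \<bar>V \<omega>\<bar>)"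
        using FU[of \<omega>] VF[of \<omega>] by simp
    qed
  qed
  have "integral\<^sup>L (PiM I Mm) (\<lambda>\<omega>. Lf (\<theta> - \<eta> *\<^sub>R g \<omega>)) \<le> integral\<^sup>L (PiM I Mm) U"
    by (rule integral_mono[OF F_int U_int FU])
  also have "integral\<^sup>L (PiM I Mm) U = Lf \<theta> - \<eta> / B * (gr \<bullet> m) + Lip * \<eta>\<^sup>2 / (2 * B\<^sup>2) *
      ((norm m)\<^sup>2 + (\<Sum>a\<in>I. integral\<^sup>L (Mm a) (\<lambda>x. (norm (Yf a x))\<^sup>2)))"
  proof -
    have iR: "integrable (PiM I Mm) (\<lambda>\<omega>. Lf \<theta> - \<eta> / B * R \<omega>)"
      by (intro Bochner_Integration.integrable_diff integrable_mult_right R_int P.integrable_const)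
    have iQ: "integrable (PiM I Mm) (\<lambda>\<omega>. Lip * \<eta>\<^sup>2 / (2 * B\<^sup>2) * Q \<omega>)"
      by (intro integrable_mult_right Q_int)
    have "integral\<^sup>L (PiM I Mm) U = integral\<^sup>L (PiM I Mm) (\<lambda>\<omega>. Lf \<theta> - \<eta> / B * R \<omega>)
        + integral\<^sup>L (PiM I Mm) (\<lambda>\<omega>. Lip * \<eta>\<^sup>2 / (2 * B\<^sup>2) * Q \<omega>)"
      unfolding U_def by (rule Bochner_Integration.integral_add[OF iR iQ])
    also have "integral\<^sup>L (PiM I Mm) (\<lambda>\<omega>. Lf \<theta> - \<eta> / B * R \<omega>)
        = integral\<^sup>L (PiM I Mm) (\<lambda>\<omega>. Lf \<theta>) - integral\<^sup>L (PiM I Mm) (\<lambda>\<omega>. \<eta> / B * R \<omega>)"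
      by (rule Bochner_Integration.integral_diff) (intro integrable_mult_right R_int P.integrable_const)+
    also have "integral\<^sup>L (PiM I Mm) (\<lambda>\<omega>. \<eta> / B * R \<omega>) = \<eta> / B * (gr \<bullet> m)"
      using R_integral by simp
    also have "integral\<^sup>L (PiM I Mm) (\<lambda>\<omega>. Lip * \<eta>\<^sup>2 / (2 * B\<^sup>2) * Q \<omega>)
       = Lip * \<eta>\<^sup>2 / (2 * B\<^sup>2) * ((norm m)\<^sup>2 + (\<Sum>a\<in>I. integral\<^sup>L (Mm a) (\<lambda>x. (norm (Yf a x))\<^sup>2)))"
      using Q_integral by simp
    finally show ?thesis by (simp add: P.prob_space)
  qed
  finally have main: "integral\<^sup>L (PiM I Mm) (\<lambda>\<omega>. Lf (\<theta> - \<eta> *\<^sub>R g \<omega>)) \<le> Lf \<theta> - \<eta> / B * (gr \<bullet> m) + Lip * \<eta>\<^sup>2 / (2 * B\<^sup>2) *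
      ((norm m)\<^sup>2 + (\<Sum>a\<in>I. integral\<^sup>L (Mm a) (\<lambda>x. (norm (Yf a x))\<^sup>2)))" .
  have main': "(\<integral>\<omega>. total_loss K D l (\<theta> - \<eta> *\<^sub>R mix_batch_grad K b gl \<theta> \<omega>) \<partial>(batch_measure K b D))
     \<le> Lf \<theta> - \<eta> / B * (gr \<bullet> m) + Lip * \<eta>\<^sup>2 / (2 * B\<^sup>2) *
      ((norm m)\<^sup>2 + (\<Sum>a\<in>I. integral\<^sup>L (Mm a) (\<lambda>x. (norm (Yf a x))\<^sup>2)))"
    using main unfolding P_eq g_def Lf_def .
  have Beq: "real (\<Sum>j<K. b j) = B" by (simp add: B_def Bn_def)
  define \<beta> where "\<beta> = (MIN k\<in>{..<K}. 1 + c_lo * (- real K + 2 - B / real (b k)))"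
  define C where "C = Lip * \<eta>\<^sup>2 / (2 * B\<^sup>2)"
  define \<gamma> where "\<gamma> = 1 + c_hi * (real K - 1)"
  have \<beta>le: "\<And>k. k < K \<Longrightarrow> \<beta> \<le> 1 + c_lo * (- real K + 2 - B / real (b k))"
    unfolding \<beta>_def by (rule Min_le) auto
  have m_eq: "m = (\<Sum>k<K. real (b k) *\<^sub>R G k \<theta>)"
    unfolding m_def I_eq by (rule sum_Sigma_fst)
  have pA: "(\<Sum>k<K. real (b k) * \<beta> * (norm (G k \<theta>))\<^sup>2) \<le> gr \<bullet> m"
    unfolding m_eq gr_def
    by (rule partA[where G="\<lambda>k. G k \<theta>" and bb="\<lambda>k. real (b k)" and B=B and c=c_lo])
       (use b_pos B_sum c_lo_nn conflicted \<beta>le in auto)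
  have pB: "(norm m)\<^sup>2 \<le> \<gamma> * (\<Sum>k<K. (real (b k))\<^sup>2 * (norm (G k \<theta>))\<^sup>2)"
    unfolding m_eq \<gamma>_def
    by (rule partB[where G="\<lambda>k. G k \<theta>" and bb="\<lambda>k. real (b k)" and c=c_hi])
       (use b_pos c_hi_nn aligned in auto)
  have pC: "(\<Sum>a\<in>I. integral\<^sup>L (Mm a) (\<lambda>x. (norm (Yf a x))\<^sup>2)) \<le> (\<Sum>k<K. real (b k) * (\<sigma> k)\<^sup>2)"
  proof -
    have "(\<Sum>a\<in>I. integral\<^sup>L (Mm a) (\<lambda>x. (norm (Yf a x))\<^sup>2)) \<le> (\<Sum>a\<in>I. (\<sigma> (fst a))\<^sup>2)"
      by (rule sum_mono) (rule Yf_var)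
    also have "\<dots> = (\<Sum>k<K. real (b k) * (\<sigma> k)\<^sup>2)"
      unfolding I_eq using sum_Sigma_fst[where f="\<lambda>k. (\<sigma> k)\<^sup>2" and K=K and b=b] by simp
    finally show ?thesis .
  qed
  obtain e :: 'a where e: "e \<in> Basis" using nonempty_Basis by blast
  have "0 \<le> norm (G 0 0 - G 0 e)" by simp
  also have "\<dots> \<le> Lip * norm (0 - e)" using Lip_task[OF K0] .
  finally have Lip_nn: "0 \<le> Lip" using e by simp
  have Cnn: "0 \<le> C" unfolding C_def using Lip_nn by simp
  have eB: "0 < \<eta> / B" using eta_pos Bpos by simp
  have "Lf \<theta> - \<eta> / B * (gr \<bullet> m) + C * ((norm m)\<^sup>2 + (\<Sum>a\<in>I. integral\<^sup>L (Mm a) (\<lambda>x. (norm (Yf a x))\<^sup>2)))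
     \<le> Lf \<theta> - \<eta> / B * (\<Sum>k<K. real (b k) * \<beta> * (norm (G k \<theta>))\<^sup>2)
        + C * (\<gamma> * (\<Sum>k<K. (real (b k))\<^sup>2 * (norm (G k \<theta>))\<^sup>2) + (\<Sum>k<K. real (b k) * (\<sigma> k)\<^sup>2))"
  proof -
    have "\<eta> / B * (\<Sum>k<K. real (b k) * \<beta> * (norm (G k \<theta>))\<^sup>2) \<le> \<eta> / B * (gr \<bullet> m)"
      using pA eB by (intro mult_left_mono) auto
    moreover have "C * ((norm m)\<^sup>2 + (\<Sum>a\<in>I. integral\<^sup>L (Mm a) (\<lambda>x. (norm (Yf a x))\<^sup>2)))
        \<le> C * (\<gamma> * (\<Sum>k<K. (real (b k))\<^sup>2 * (norm (G k \<theta>))\<^sup>2) + (\<Sum>k<K. real (b k) * (\<sigma> k)\<^sup>2))"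
      using pB pC Cnn by (intro mult_left_mono) auto
    ultimately show ?thesis by linarith
  qed
  also have "\<dots> = Lf \<theta> + (\<Sum>k<K. real (b k) * (- \<eta> / B * \<beta> * (norm (G k \<theta>))\<^sup>2 + C * (\<sigma> k)\<^sup>2))
      + (\<Sum>k<K. (real (b k))\<^sup>2 * C * \<gamma> * (norm (G k \<theta>))\<^sup>2)"
    by (simp add: sum.distrib sum_distrib_left sum_negf sum_subtractf sum_divide_distrib algebra_simps)
  finally have fin: "Lf \<theta> - \<eta> / B * (gr \<bullet> m) + C * ((norm m)\<^sup>2 + (\<Sum>a\<in>I. integral\<^sup>L (Mm a) (\<lambda>x. (norm (Yf a x))\<^sup>2)))
      \<le> Lf \<theta> + (\<Sum>k<K. real (b k) * (- \<eta> / B * \<beta> * (norm (G k \<theta>))\<^sup>2 + C * (\<sigma> k)\<^sup>2))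
      + (\<Sum>k<K. (real (b k))\<^sup>2 * C * \<gamma> * (norm (G k \<theta>))\<^sup>2)" .
  show ?thesis
    unfolding Beq using order.trans[OF main' fin[unfolded C_def]] unfolding \<beta>_def \<gamma>_def Lf_def .
qed

end
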